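(* Let $m,n,a$ be natural numbers with $n\geq 1$, $m\geq 1$ and $1\leq a\leq 9$. Then the equation $$C_n = a\left(\frac{10^m-1}{9}\right)$$ holds if and only if $(m,n,a)\in\{(1,1,3),(2,3,9)\}$. That is, the only Lucas-balancing numbers $C_n$ with $n\ge 1$ that are decimal repdigits are $C_1=3$ and $C_3=99$.
   Context: The Lucas-balancing sequence $(C_n)_{n\geq 0}$ is defined by $C_0=1$, $C_1=3$ and $C_{n+1}=6C_n-C_{n-1}$ for $n\geq 1$. For $1\le a\le 9$ and $m\ge 1$, the number $a\frac{10^m-1}{9}$ is the decimal integer consisting of $m$ copies of the digit $a$. *)

theory Defs
  imports Main
begin

fun lucas_bal :: "nat \<Rightarrow> int" where
  "lucas_bal 0 = 1"
| "lucas_bal (Suc 0) = 3"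
| "lucas_bal (Suc (Suc n)) = 6 * lucas_bal (Suc n) - lucas_bal n"

end

theory Submission
  imports Defs
begin

lemma lb_step: "lucas_bal (Suc (Suc n)) mod k = (6 * (lucas_bal (Suc n) mod k) - lucas_bal n mod k) mod k"
proof -
  fix x y :: int
  have g: "\<And>x y k. (6 * x - y) mod k = (6 * (x mod k) - y mod k) mod (k::int)"
  proof -
    fix x y k :: int
    have "(6 * x - y) mod k = ((6 * x) mod k - y mod k) mod k" by (rule mod_diff_eq[symmetric])
    also have "(6 * x) mod k = (6 * (x mod k)) mod k" by (rule mod_mult_right_eq[symmetric])
    also have "((6 * (x mod k)) mod k - y mod k) mod k = (6 * (x mod k) - y mod k) mod k"
      by (rule mod_diff_left_eq)
    finally show "(6 * x - y) mod k = (6 * (x mod k) - y mod k) mod k" .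
  qed
  show ?thesis unfolding lucas_bal.simps(3) by (rule g)
qed

lemma lb_mod8: "(lucas_bal n mod 8, lucas_bal (Suc n) mod 8) \<in> {(1,3),(3,1)}"
proof (induction n)
  case 0 then show ?case by simp
next
  case (Suc n)
  have e: "lucas_bal (Suc (Suc n)) mod 8 = (6 * (lucas_bal (Suc n) mod 8) - lucas_bal n mod 8) mod 8"
    by (rule lb_step)
  from Suc.IH show ?case unfolding e by auto
qed

lemma lb_mod5: "(lucas_bal n mod 5, lucas_bal (Suc n) mod 5) \<in> {(1,3),(3,2),(2,4),(4,2),(2,3),(3,1)}"
proof (induction n)
  case 0 then show ?case by simp
next
  case (Suc n)
  have e: "lucas_bal (Suc (Suc n)) mod 5 = (6 * (lucas_bal (Suc n) mod 5) - lucas_bal n mod 5) mod 5"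
    by (rule lb_step)
  from Suc.IH show ?case unfolding e by auto
qed

lemma lb_mod7: "(lucas_bal n mod 7, lucas_bal (Suc n) mod 7) \<in> {(1,3),(3,3),(3,1)}"
proof (induction n)
  case 0 then show ?case by simp
next
  case (Suc n)
  have e: "lucas_bal (Suc (Suc n)) mod 7 = (6 * (lucas_bal (Suc n) mod 7) - lucas_bal n mod 7) mod 7"
    by (rule lb_step)
  from Suc.IH show ?case unfolding e by auto
qed

lemma lb_inc: "0 < lucas_bal n \<and> lucas_bal n < lucas_bal (Suc n)"
proof (induction n)
  case 0 then show ?case by simp
next
  case (Suc n)
  then show ?case by simp
qed

lemma lb_mono: "strict_mono lucas_bal"
  using lb_inc by (simp add: strict_mono_Suc_iff)

lemma lb_big: "n \<ge> 4 \<Longrightarrow> lucas_bal n \<ge> 577"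
proof -
  assume "n \<ge> 4"
  hence "lucas_bal 4 \<le> lucas_bal n" using lb_mono strict_mono_less_eq by blast
  moreover have "lucas_bal 4 = 577" by (simp add: numeral_eq_Suc)
  ultimately show ?thesis by simp
qed

lemma lb_vals: "lucas_bal 1 = 3" "lucas_bal 2 = 17" "lucas_bal 3 = 99"
  by (simp_all add: numeral_eq_Suc)

lemma rep9: "9 * ((10::int) ^ m - 1) div 9 = 10 ^ m - 1"
  by simp

lemma rep_dvd: "(10::int) ^ m - 1 = 9 * ((10 ^ m - 1) div 9)"
proof -
  have "(10::int) ^ m mod 9 = (10 mod 9) ^ m mod 9" by (rule power_mod[symmetric])
  then have "(10::int) ^ m mod 9 = 1" by simp
  then show ?thesis by presburger
qed

lemma aux8: "9*R = 8*T - 1 \<Longrightarrow> R mod 8 = (7::int)" by presburger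

lemma aux8b: "R mod 8 = 7 \<Longrightarrow> (c*R) mod 8 = (c*7) mod (8::int)"
  by (metis mod_mult_right_eq)

theorem theorem3:
  fixes m n a :: nat
  assumes "n \<ge> 1" and "m \<ge> 1" and "1 \<le> a" and "a \<le> 9"
  shows "lucas_bal n = int a * ((10 ^ m - 1) div 9) \<longleftrightarrow>
         (m, n, a) \<in> {(1, 1, 3), (2, 3, 9)}"
proof
  assume "(m, n, a) \<in> {(1, 1, 3), (2, 3, 9)}"
  then show "lucas_bal n = int a * ((10 ^ m - 1) div 9)" using lb_vals by auto
next
  assume H: "lucas_bal n = int a * ((10 ^ m - 1) div 9)"
  define R :: int where "R = (10 ^ m - 1) div 9"
  have R9: "10 ^ m - 1 = 9 * R" unfolding R_def by (rule rep_dvd)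
  have C: "lucas_bal n = int a * R" using H unfolding R_def .
  show "(m, n, a) \<in> {(1, 1, 3), (2, 3, 9)}"
  proof (cases "m \<ge> 3")
    case True
    then obtain k where k: "m = k + 3" by (metis add.commute le_add_diff_inverse)
    have "(10::int) ^ m = 8 * (125 * 10 ^ k)" unfolding k by (simp add: power_add)
    then have R8: "R mod 8 = 7" using R9 aux8[of R "125 * 10 ^ k"] by simp
    have aR: "lucas_bal n mod 8 = (int a * 7) mod 8" using aux8b[OF R8, of "int a"] C by simp
    have c8: "lucas_bal n mod 8 = 1 \<or> lucas_bal n mod 8 = 3" using lb_mod8[of n] by auto
    have c5: "lucas_bal n mod 5 \<noteq> 0" using lb_mod5[of n] by auto
    have c7: "lucas_bal n mod 7 \<noteq> 0" using lb_mod7[of n] by auto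
    have a5: "a \<noteq> 5" using C c5 by auto
    have a7: "a \<noteq> 7" using C c7 by auto
    have "a = 1 \<or> a = 2 \<or> a = 3 \<or> a = 4 \<or> a = 6 \<or> a = 8 \<or> a = 9" using assms a5 a7 by auto
    then have False using aR c8 by (elim disjE; simp)
    then show ?thesis ..
  next
    case False
    then have m12: "m = 1 \<or> m = 2" using assms by auto
    then have HR: "R = 1 \<or> R = 11" unfolding R_def by auto
    have "int a * R \<le> 99" using HR assms by auto
    then have "lucas_bal n \<le> 99" using C by simp
    then have "n \<le> 3" using lb_big[of n] by (cases "n \<ge> 4") auto
    then have "n = 1 \<or> n = 2 \<or> n = 3" using assms by auto
    moreover have r1: "m = 1 \<Longrightarrow> R = 1" unfolding R_def by simp
    moreover have r2: "m = 2 \<Longrightarrow> R = 11" unfolding R_def by simp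
    ultimately consider "n = 1 \<and> m = 1" | "n = 1 \<and> m = 2" | "n = 2 \<and> m = 1" | "n = 2 \<and> m = 2"
      | "n = 3 \<and> m = 1" | "n = 3 \<and> m = 2" using m12 by blast
    then show ?thesis
    proof cases
      case 1 then show ?thesis using C lb_vals r1 by simp
    next
      case 2 then have "int a * 11 = 3" using C lb_vals r2 by simp then have False by presburger then show ?thesis ..
    next
      case 3 then show ?thesis using C lb_vals r1 assms by simp
    next
      case 4 then have "int a * 11 = 17" using C lb_vals r2 by simp then have False by presburger then show ?thesis ..
    next
      case 5 then show ?thesis using C lb_vals r1 assms by simp
    next
      case 6 then show ?thesis using C lb_vals r2 by simp
    qed
  qed
qed

end
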